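(* Let $\alpha>-1$, $0\le\gamma<2+\alpha$, $\beta\in\{0,1/3\}$, and let $\sigma$ be a weight on $\mathcal H$. Let $1<p<\frac{2+\alpha}{\gamma}$ (with $\frac{2+\alpha}{\gamma}=\infty$ if $\gamma=0$) and let $q$ satisfy $\frac1p-\frac1q=\frac{\gamma}{2+\alpha}$. Then there is a constant $C=C(p,\alpha,\gamma)$ such that for all $f$, $$\left(\int_{\mathcal H}\big(\mathcal M^{d,\beta}_{\sigma,\alpha,\gamma}f\big)^q\sigma\,dV_\alpha\right)^{1/q}\le C\left(\int_{\mathcal H}|f|^p\sigma\,dV_\alpha\right)^{1/p}.$$
   Context: $\mathcal H=\{x+iy:x\in\mathbb R,\ y>0\}$; for $\alpha>-1$, $dV_\alpha(x+iy)=y^\alpha dx\,dy$. A weight is a nonnegative locally integrable function; $|E|_{\sigma,\alpha}=\int_E\sigma dV_\alpha$. For an interval $I$, $Q_I=\{x+iy:x\in I,0<y<|I|\}$. For $\beta\in\{0,1/3\}$, $\mathcal D^\beta=\{2^j([0,1)+m+(-1)^j\beta): m,j\in\mathbb Z\}$. $\mathcal M^{d,\beta}_{\sigma,\alpha,\gamma}f(z)=\sup_{I\in\mathcal D^\beta,\ z\in Q_I}|Q_I|_{\sigma,\alpha}^{-(1-\frac{\gamma}{2+\alpha})}\int_{Q_I}|f|\sigma\,dV_\alpha$. *)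

theory Defs
  imports "HOL-Analysis.Analysis"
begin

definition UHP :: "complex set" where
  "UHP = {z. 0 < Im z}"

text \<open>Real powers on extended nonnegative reals (used only with positive exponents).\<close>
definition epowr :: "ennreal \<Rightarrow> real \<Rightarrow> ennreal" where
  "epowr x a = (if x = \<infinity> then \<infinity> else ennreal (enn2real x powr a))"

definition wdens :: "real \<Rightarrow> (complex \<Rightarrow> real) \<Rightarrow> complex \<Rightarrow> ennreal" where
  "wdens \<alpha> \<sigma> z = ennreal (\<sigma> z * Im z powr \<alpha>)"

definition weight :: "(complex \<Rightarrow> real) \<Rightarrow> bool" where
  "weight \<sigma> \<longleftrightarrow> \<sigma> \<in> borel_measurable lborel \<and> (\<forall>z\<in>UHP. 0 \<le> \<sigma> z) \<and>
     (\<forall>K. compact K \<and> K \<subseteq> UHP \<longrightarrow> set_integrable lborel K \<sigma>)"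

text \<open>An interval [a,b) is represented by the pair (a,b).  Dyadic grid D^beta.\<close>
definition dyadic :: "real \<Rightarrow> (real \<times> real) set" where
  "dyadic \<beta> = {(2 powi j * (of_int m + (-1) powi j * \<beta>),
                  2 powi j * (of_int m + 1 + (-1) powi j * \<beta>)) | j m :: int. True}"

definition box :: "real \<times> real \<Rightarrow> complex set" where
  "box I = {z. fst I \<le> Re z \<and> Re z < snd I \<and> 0 < Im z \<and> Im z < snd I - fst I}"

definition wmeas :: "real \<Rightarrow> (complex \<Rightarrow> real) \<Rightarrow> complex set \<Rightarrow> ennreal" where
  "wmeas \<alpha> \<sigma> E = (\<integral>\<^sup>+ z\<in>E. wdens \<alpha> \<sigma> z \<partial>lborel)"

text \<open>Dyadic fractional weighted maximal function M^{d,beta}_{sigma,alpha,gamma} f.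
  Convention: a box with |Q_I| = 0 contributes 0 (0/0 = 0 in ennreal).\<close>
definition dmax :: "real \<Rightarrow> (complex \<Rightarrow> real) \<Rightarrow> real \<Rightarrow> real \<Rightarrow> (complex \<Rightarrow> complex) \<Rightarrow> complex \<Rightarrow> ennreal" where
  "dmax \<beta> \<sigma> \<alpha> \<gamma> f z =
     (SUP I \<in> {I \<in> dyadic \<beta>. z \<in> box I}.
        (\<integral>\<^sup>+ w\<in>box I. ennreal (norm (f w)) * wdens \<alpha> \<sigma> w \<partial>lborel)
        / epowr (wmeas \<alpha> \<sigma> (box I)) (1 - \<gamma> / (2 + \<alpha>)))"

end

theory Submission
  imports Defs
begin
lemma box_sets[measurable]: "box I \<in> sets borel"
  unfolding box_def by measurable

lemma box_UHP: "box I \<subseteq> UHP"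
  unfolding box_def UHP_def by auto

lemma dvd3: "(3::int) dvd ((-2)^d - 1)"
proof (induction d)
  case 0 then show ?case by simp
next
  case (Suc d)
  have e: "(-2::int)^Suc d - 1 = -2 * ((-2)^d - 1) - 3" by simp
  show ?case unfolding e using Suc by (metis dvd_diff dvd_mult dvd_refl)
qed

lemma m1_powi: "((-1::real) powi i) = of_int ((-1::int)^nat \<bar>i\<bar>)"
proof (cases "i \<ge> 0")
  case True
  then have "i = int (nat \<bar>i\<bar>)" by simp
  then have "(-1::real) powi i = (-1) ^ nat \<bar>i\<bar>" by (metis power_int_of_nat)
  then show ?thesis by simp
next
  case False
  then have "i = - int (nat \<bar>i\<bar>)" by simp
  then have "(-1::real) powi i = (-1) powi (int (nat \<bar>i\<bar>))"
    by (metis power_int_minus_one_minus)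
  also have "\<dots> = (-1) ^ nat \<bar>i\<bar>" by (rule power_int_of_nat)
  finally show ?thesis by simp
qed

definition iv :: "real \<Rightarrow> int \<Rightarrow> int \<Rightarrow> real \<times> real" where
  "iv \<beta> j m = (2 powi j * (of_int m + (-1) powi j * \<beta>), 2 powi j * (of_int m + 1 + (-1) powi j * \<beta>))"

lemma dyadic_iv: "dyadic \<beta> = range (\<lambda>(j,m). iv \<beta> j m)"
  unfolding dyadic_def iv_def by auto

lemma endpoint:
  assumes b: "\<beta> = 0 \<or> \<beta> = 1/3" and ij: "i \<le> j"
  shows "\<exists>m'. 2 powi j * (of_int m + (-1) powi j * \<beta>) = (2::real) powi i * (of_int m' + (-1) powi i * \<beta>)"
proof -
  obtain d where jd: "j = i + int d" using ij by (metis zle_iff_zadd)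
  have p2: "(2::real) powi j = 2 powi i * 2 ^ d" unfolding jd
    by (simp add: power_int_add power_int_of_nat)
  have p1: "(-1::real) powi j = (-1) powi i * (-1) ^ d" unfolding jd
    by (simp add: power_int_add power_int_of_nat)
  obtain k where k: "(-2::int)^d - 1 = 3 * k" using dvd3 by (metis dvdE)
  have kr: "(-2::real)^d = 3 * of_int k + 1"
  proof -
    have "real_of_int ((-2::int)^d) = of_int (3*k + 1)" using k by (metis diff_eq_eq)
    then show ?thesis by simp
  qed
  define e where "e = (-1::int)^nat \<bar>i\<bar>"
  have er: "(-1::real) powi i = of_int e" unfolding e_def by (rule m1_powi)
  show ?thesis
  proof (cases "\<beta> = 0")
    case True
    then show ?thesis using p2 by (intro exI[of _ "2^d * m"]) simp
  next
    case False
    with b have b3: "\<beta> = 1/3" by simp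
    have "(-1::real)^d * 2^d = (-2)^d" by (metis mult_minus1 power_mult_distrib)
    then have "2 powi j * (of_int m + (-1) powi j * \<beta>) =
       2 powi i * (of_int (2^d * m + e * k) + (-1) powi i * \<beta>)"
      unfolding p2 p1 er b3 using kr by (simp add: algebra_simps)
    then show ?thesis by blast
  qed
qed

definition ep :: "real \<Rightarrow> int \<Rightarrow> int \<Rightarrow> real" where
  "ep \<beta> j m = 2 powi j * (of_int m + (-1) powi j * \<beta>)"

lemma iv_ep: "iv \<beta> j m = (ep \<beta> j m, ep \<beta> j (m+1))"
  unfolding iv_def ep_def by simp

lemma ep_less_iff: "ep \<beta> i m < ep \<beta> i n \<longleftrightarrow> m < n"
  unfolding ep_def by (simp add: mult_less_cancel_left_pos mult_le_cancel_left_pos)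

lemma ep_le_iff: "ep \<beta> i m \<le> ep \<beta> i n \<longleftrightarrow> m \<le> n"
  unfolding ep_def by (simp add: mult_less_cancel_left_pos mult_le_cancel_left_pos)

lemma ep_side: "ep \<beta> i (m+1) - ep \<beta> i m = 2 powi i"
  unfolding ep_def by (simp add: algebra_simps)

lemma ep_endpoint:
  assumes "\<beta> = 0 \<or> \<beta> = 1/3" "i \<le> j"
  shows "\<exists>m'. ep \<beta> j m = ep \<beta> i m'"
  using endpoint[OF assms, of m] unfolding ep_def by blast

lemma ep_nest:
  assumes b: "\<beta> = 0 \<or> \<beta> = 1/3" and ij: "i \<le> j"
    and h1: "ep \<beta> j n < ep \<beta> i (m+1)" and h2: "ep \<beta> i m < ep \<beta> j (n+1)"
  shows "ep \<beta> j n \<le> ep \<beta> i m \<and> ep \<beta> i (m+1) \<le> ep \<beta> j (n+1)"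
proof -
  obtain n1 where n1: "ep \<beta> j n = ep \<beta> i n1" using ep_endpoint[OF b ij] by blast
  obtain n2 where n2: "ep \<beta> j (n+1) = ep \<beta> i n2" using ep_endpoint[OF b ij] by blast
  have "n1 < m + 1" using h1 unfolding n1 ep_less_iff .
  then have "n1 \<le> m" by simp
  then have A: "ep \<beta> j n \<le> ep \<beta> i m" unfolding n1 ep_le_iff .
  have "m < n2" using h2 unfolding n2 ep_less_iff .
  then have "m + 1 \<le> n2" by simp
  then have B: "ep \<beta> i (m+1) \<le> ep \<beta> j (n+1)" unfolding n2 ep_le_iff .
  from A B show ?thesis by blast
qed

lemma box_nest:
  assumes b: "\<beta> = 0 \<or> \<beta> = 1/3" and ij: "i \<le> j"
    and ne: "box (iv \<beta> i m) \<inter> box (iv \<beta> j n) \<noteq> {}"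
  shows "box (iv \<beta> i m) \<subseteq> box (iv \<beta> j n)"
proof -
  from ne obtain z where z: "z \<in> box (iv \<beta> i m)" "z \<in> box (iv \<beta> j n)" by blast
  have "ep \<beta> j n < ep \<beta> i (m+1)" "ep \<beta> i m < ep \<beta> j (n+1)"
    using z unfolding box_def iv_ep by auto
  from ep_nest[OF b ij this] have N: "ep \<beta> j n \<le> ep \<beta> i m" "ep \<beta> i (m+1) \<le> ep \<beta> j (n+1)" by auto
  have "(2::real) powi i \<le> 2 powi j" using ij by (simp add: power_int_increasing)
  then have S: "ep \<beta> i (m+1) - ep \<beta> i m \<le> ep \<beta> j (n+1) - ep \<beta> j n" by (simp add: ep_side)
  show ?thesis unfolding box_def iv_ep using N S by auto
qed

definition side :: "real \<times> real \<Rightarrow> real" where "side I = snd I - fst I"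

lemma box_sub:
  assumes lt: "fst I < snd I" and sub: "box I \<subseteq> box J"
  shows "fst J \<le> fst I \<and> fst I < snd J \<and> side I \<le> side J"
proof -
  have A: "Complex (fst I) y \<in> box J" if "0 < y" "y < side I" for y
  proof -
    have "Complex (fst I) y \<in> box I" using that lt by (simp add: box_def side_def)
    then show ?thesis using sub by blast
  qed
  have "Complex (fst I) (side I / 2) \<in> box J" using lt by (intro A) (auto simp: side_def)
  then have 1: "fst J \<le> fst I \<and> fst I < snd J" unfolding box_def by auto
  have 2: "side I \<le> side J"
  proof (rule ccontr)
    assume "\<not> ?thesis"
    then have "side J < side I" by simp
    moreover have "0 < side I" using lt by (simp add: side_def)
    ultimately have "Complex (fst I) ((max (side J) 0 + side I)/2) \<in> box J"
      by (intro A) auto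
    then show False using \<open>side J < side I\<close> unfolding box_def side_def by (auto simp: max_def split: if_splits)
  qed
  from 1 2 show ?thesis by blast
qed

lemma subsing_finite: "(\<And>a b. a \<in> A \<Longrightarrow> b \<in> A \<Longrightarrow> a = b) \<Longrightarrow> finite A"
proof (cases "A = {}")
  case False
  assume h: "\<And>a b. a \<in> A \<Longrightarrow> b \<in> A \<Longrightarrow> a = b"
  from False obtain a where "a \<in> A" by blast
  with h have "A \<subseteq> {a}" by blast
  then show ?thesis using finite_subset by blast
qed simp

lemma side_iv: "side (iv \<beta> j n) = 2 powi j"
  unfolding side_def iv_ep using ep_side by simp

lemma fst_lt_snd_iv: "fst (iv \<beta> j n) < snd (iv \<beta> j n)"
  unfolding iv_ep by (simp add: ep_less_iff)

definition good :: "(real \<times> real) set \<Rightarrow> bool" where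
  "good D \<longleftrightarrow> countable D \<and> (\<forall>I\<in>D. fst I < snd I) \<and>
     (\<forall>I\<in>D. \<forall>J\<in>D. box I \<inter> box J \<noteq> {} \<longrightarrow> box I \<subseteq> box J \<or> box J \<subseteq> box I) \<and>
     (\<forall>I\<in>D. \<forall>n::nat. finite {J\<in>D. box I \<subseteq> box J \<and> side J \<le> 2^n})"

lemma good_dyadic:
  assumes b: "\<beta> = 0 \<or> \<beta> = 1/3"
  shows "good (dyadic \<beta>)"
  unfolding good_def
proof (intro conjI ballI allI impI)
  show "countable (dyadic \<beta>)" unfolding dyadic_iv by simp
next
  fix I assume "I \<in> dyadic \<beta>"
  then show "fst I < snd I" unfolding dyadic_iv using fst_lt_snd_iv by auto
next
  fix I J assume "I \<in> dyadic \<beta>" "J \<in> dyadic \<beta>" and ne: "box I \<inter> box J \<noteq> {}"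
  then obtain i m j n where IJ: "I = iv \<beta> i m" "J = iv \<beta> j n" unfolding dyadic_iv by auto
  show "box I \<subseteq> box J \<or> box J \<subseteq> box I"
  proof (cases "i \<le> j")
    case True
    then show ?thesis using box_nest[OF b True, of m n] ne IJ by auto
  next
    case False
    then have ji: "j \<le> i" by simp
    show ?thesis using box_nest[OF b ji, of n m] ne IJ by (auto simp: Int_commute)
  qed
next
  fix I n0 assume "I \<in> dyadic \<beta>"
  then obtain i m where I: "I = iv \<beta> i m" unfolding dyadic_iv by auto
  define x where "x = fst I"
  define T where "T = {(j,n). box I \<subseteq> box (iv \<beta> j n) \<and> side (iv \<beta> j n) \<le> 2^n0}"
  have T: "T \<subseteq> (\<Union>j\<in>{i..int n0}. {j} \<times> {n. ep \<beta> j n \<le> x \<and> x < ep \<beta> j (n+1)})"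
  proof
    fix t assume "t \<in> T"
    then obtain j n where t: "t = (j,n)" "box I \<subseteq> box (iv \<beta> j n)" "side (iv \<beta> j n) \<le> 2^n0"
      unfolding T_def by auto
    from box_sub[OF _ t(2)] have bs: "fst (iv \<beta> j n) \<le> x \<and> x < snd (iv \<beta> j n) \<and> side I \<le> side (iv \<beta> j n)"
      using fst_lt_snd_iv I x_def by auto
    have "(2::real) powi i \<le> 2 powi j" using bs I side_iv by metis
    then have ij: "i \<le> j" using power_int_strict_increasing[of j i "2::real"] by (cases "j < i") auto
    have "(2::real) powi j \<le> 2 powi (int n0)" using t(3) side_iv by (metis power_int_of_nat)
    then have jn: "j \<le> int n0" using power_int_strict_increasing[of "int n0" j "2::real"] by (cases "int n0 < j") auto
    show "t \<in> (\<Union>j\<in>{i..int n0}. {j} \<times> {n. ep \<beta> j n \<le> x \<and> x < ep \<beta> j (n+1)})"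
      using t(1) ij jn bs unfolding iv_ep by auto
  qed
  have fin: "finite {n. ep \<beta> j n \<le> x \<and> x < ep \<beta> j (n+1)}" for j
  proof (rule subsing_finite)
    fix a b assume "a \<in> {n. ep \<beta> j n \<le> x \<and> x < ep \<beta> j (n+1)}" "b \<in> {n. ep \<beta> j n \<le> x \<and> x < ep \<beta> j (n+1)}"
    then have "ep \<beta> j a < ep \<beta> j (b+1)" "ep \<beta> j b < ep \<beta> j (a+1)" by auto
    then have "a < b + 1" "b < a + 1" unfolding ep_less_iff .
    then show "a = b" by simp
  qed
  have "finite T" by (rule finite_subset[OF T]) (auto intro: fin)
  have "{J \<in> dyadic \<beta>. box I \<subseteq> box J \<and> side J \<le> 2 ^ n0} \<subseteq> (\<lambda>(j,n). iv \<beta> j n) ` T"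
    unfolding dyadic_iv T_def by auto
  then show "finite {J \<in> dyadic \<beta>. box I \<subseteq> box J \<and> side J \<le> 2 ^ n0}"
    using \<open>finite T\<close> finite_subset by blast
qed

lemma lt_div: "(l::ennreal) < a / m \<Longrightarrow> l * m \<le> a"
  by (metis divide_le_posI_ennreal ennreal_zero_less_mult_iff
    linorder_not_less mult.commute not_gr_zero order_less_imp_le)

lemma epowr1[simp]: "epowr x 1 = x"
  unfolding epowr_def by (simp add: ennreal_enn2real_if)

definition avg :: "complex measure \<Rightarrow> (complex \<Rightarrow> ennreal) \<Rightarrow> real \<Rightarrow> real \<times> real \<Rightarrow> ennreal" where
  "avg M h e I = (\<integral>\<^sup>+x\<in>box I. h x \<partial>M) / epowr (emeasure M (box I)) e"

definition MF :: "(real \<times> real) set \<Rightarrow> complex measure \<Rightarrow> real \<Rightarrow> (complex \<Rightarrow> ennreal) \<Rightarrow> complex \<Rightarrow> ennreal" where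
  "MF D M e h z = (SUP I\<in>{I\<in>D. z \<in> box I}. avg M h e I)"

lemma maximal_union:
  assumes g: "good D" and Gn: "Gn \<subseteq> {J\<in>D. side J \<le> 2^n}"
  defines "Mx \<equiv> {I\<in>Gn. \<forall>J\<in>Gn. box I \<subseteq> box J \<longrightarrow> box J = box I}"
  shows "\<Union>(box ` Gn) = \<Union>(box ` Mx)" and "disjoint_family_on id (box ` Mx)"
    and "Mx \<subseteq> Gn"
proof -
  show "Mx \<subseteq> Gn" unfolding Mx_def by auto
  show "\<Union>(box ` Gn) = \<Union>(box ` Mx)"
  proof
    show "\<Union>(box ` Mx) \<subseteq> \<Union>(box ` Gn)" unfolding Mx_def by auto
    show "\<Union>(box ` Gn) \<subseteq> \<Union>(box ` Mx)"
    proof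
      fix z assume "z \<in> \<Union>(box ` Gn)"
      then obtain I where I: "I \<in> Gn" "z \<in> box I" by auto
      define S where "S = box ` {J\<in>Gn. box I \<subseteq> box J}"
      have "S \<subseteq> box ` {J\<in>D. box I \<subseteq> box J \<and> side J \<le> 2^n}"
        unfolding S_def using Gn by auto
      moreover have "finite {J\<in>D. box I \<subseteq> box J \<and> side J \<le> 2^n}"
        using g I Gn unfolding good_def by auto
      ultimately have finS: "finite S" using finite_subset by blast
      have "box I \<in> S" unfolding S_def using I by auto
      from finite_has_maximal2[OF finS this] obtain mB where
        mB: "mB \<in> S" "box I \<subseteq> mB" "\<forall>b\<in>S. mB \<subseteq> b \<longrightarrow> mB = b" by auto
      from mB(1) obtain J0 where J0: "J0 \<in> Gn" "box I \<subseteq> box J0" "mB = box J0" unfolding S_def by auto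
      have "J0 \<in> Mx"
      proof -
        have "box J = box J0" if "J \<in> Gn" "box J0 \<subseteq> box J" for J
        proof -
          have "box J \<in> S" unfolding S_def using that J0 by auto
          then show ?thesis using mB(3) that J0 by auto
        qed
        then show ?thesis unfolding Mx_def using J0 by auto
      qed
      then show "z \<in> \<Union>(box ` Mx)" using J0 I by auto
    qed
  qed
  show "disjoint_family_on id (box ` Mx)"
    unfolding disjoint_family_on_def
  proof (intro ballI impI)
    fix A B assume A: "A \<in> box ` Mx" and B: "B \<in> box ` Mx" and ne: "A \<noteq> B"
    from A obtain I where I: "I \<in> Mx" "A = box I" by auto
    from B obtain J where J: "J \<in> Mx" "B = box J" by auto
    show "id A \<inter> id B = {}"
    proof (rule ccontr)
      assume "id A \<inter> id B \<noteq> {}"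
      then have "box I \<inter> box J \<noteq> {}" using I J by simp
      moreover have "I \<in> D" "J \<in> D" using I J Gn unfolding Mx_def by auto
      ultimately have "box I \<subseteq> box J \<or> box J \<subseteq> box I" using g unfolding good_def by blast
      then have "box I = box J" using I J unfolding Mx_def by auto
      then show False using ne I J by simp
    qed
  qed
qed

lemma countable_UN_box_sets:
  assumes "countable A" "sets M = sets borel"
  shows "\<Union>(box ` A) \<in> sets M"
proof -
  have "box ` A \<subseteq> sets M" unfolding assms(2) using box_sets by blast
  moreover have "countable (box ` A)" using assms(1) by (rule countable_image)
  ultimately show ?thesis by (intro sets.countable_Union)
qed

lemma weak_type:
  assumes g: "good D" and sM: "sets M = sets borel" and h[measurable]: "h \<in> borel_measurable M"
  shows "l * emeasure M {z. l < MF D M 1 h z} \<le> (\<integral>\<^sup>+x. h x \<partial>M)"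
proof -
  have cD: "countable D" using g unfolding good_def by auto
  have boxM: "box I \<in> sets M" for I unfolding sM by (rule box_sets)
  define G where "G = {I\<in>D. l < avg M h 1 I}"
  have lsup: "l < MF D M 1 h z \<longleftrightarrow> (\<exists>I\<in>{I\<in>D. z \<in> box I}. l < avg M h 1 I)" for z
    unfolding MF_def by (rule less_SUP_iff)
  have eq: "{z. l < MF D M 1 h z} = \<Union>(box ` G)"
  proof (intro set_eqI iffI)
    fix z assume "z \<in> {z. l < MF D M 1 h z}"
    then have "\<exists>I\<in>{I\<in>D. z \<in> box I}. l < avg M h 1 I" using lsup by simp
    then obtain I where I: "I \<in> {I\<in>D. z \<in> box I}" "l < avg M h 1 I" by (rule bexE)
    then have "I \<in> G" "z \<in> box I" unfolding G_def by simp_all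
    then show "z \<in> \<Union>(box ` G)" by (rule UN_I)
  next
    fix z assume "z \<in> \<Union>(box ` G)"
    then obtain I where "I \<in> D" "z \<in> box I" "l < avg M h 1 I" unfolding G_def by auto
    then have "\<exists>I\<in>{I\<in>D. z \<in> box I}. l < avg M h 1 I" by (intro bexI[where x=I]) simp_all
    then have "l < MF D M 1 h z" by (rule iffD2[OF lsup])
    then show "z \<in> {z. l < MF D M 1 h z}" by simp
  qed
  define Gn where "Gn n = {I\<in>G. side I \<le> 2^n}" for n :: nat
  define U where "U n = \<Union>(box ` Gn n)" for n
  have cG: "countable (Gn n)" for n using cD unfolding Gn_def G_def by (rule countable_subset[rotated]) auto
  have UM: "U n \<in> sets M" for n unfolding U_def using cG sM by (rule countable_UN_box_sets)
  have inc: "incseq U"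
  proof (rule incseq_SucI)
    fix n
    have t: "x \<le> 2^n \<Longrightarrow> x \<le> 2 * 2^n" for x :: real
      using zero_le_power[of "2::real" n] by linarith
    then have "Gn n \<subseteq> Gn (Suc n)" unfolding Gn_def by auto
    then show "U n \<subseteq> U (Suc n)" unfolding U_def by auto
  qed
  have UG: "(\<Union>n. U n) = \<Union>(box ` G)"
  proof
    show "(\<Union>n. U n) \<subseteq> \<Union>(box ` G)" unfolding U_def Gn_def by auto
    show "\<Union>(box ` G) \<subseteq> (\<Union>n. U n)"
    proof
      fix z assume "z \<in> \<Union>(box ` G)"
      then obtain I where I: "I \<in> G" "z \<in> box I" by auto
      obtain n where "side I < 2^n" using real_arch_pow[of 2 "side I"] by auto
      then have "I \<in> Gn n" unfolding Gn_def using I by auto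
      then show "z \<in> (\<Union>n. U n)" unfolding U_def using I by auto
    qed
  qed
  have bound: "l * emeasure M (U n) \<le> (\<integral>\<^sup>+x. h x \<partial>M)" for n
  proof -
    define Mx where "Mx = {I\<in>Gn n. \<forall>J\<in>Gn n. box I \<subseteq> box J \<longrightarrow> box J = box I}"
    have GnD: "Gn n \<subseteq> {J\<in>D. side J \<le> 2^n}" unfolding Gn_def G_def by auto
    note mu = maximal_union[OF g GnD, folded Mx_def]
    define B where "B = box ` Mx"
    have cB: "countable B" unfolding B_def using cG mu(3) by (meson countable_image countable_subset)
    have BM: "S \<in> sets M" if "S \<in> B" for S using that boxM unfolding B_def by auto
    have UB: "U n = \<Union>(id ` B)" unfolding U_def B_def using mu(1) by simp
    have dB: "disjoint_family_on id B" unfolding B_def by (rule mu(2))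
    have "emeasure M (\<Union>(id ` B)) = (\<integral>\<^sup>+S. emeasure M (id S) \<partial>count_space B)"
      by (rule emeasure_UN_countable[OF _ cB dB]) (simp add: BM)
    then have "l * emeasure M (U n) = l * (\<integral>\<^sup>+S. emeasure M S \<partial>count_space B)"
      unfolding UB by simp
    also have "\<dots> = (\<integral>\<^sup>+S. l * emeasure M S \<partial>count_space B)"
      by (rule nn_integral_cmult[symmetric]) (rule borel_measurable_count_space)
    also have "\<dots> \<le> (\<integral>\<^sup>+S. emeasure (density M h) S \<partial>count_space B)"
    proof (rule nn_integral_mono)
      fix S assume "S \<in> space (count_space B)"
      then obtain I where I: "I \<in> Mx" "S = box I" unfolding B_def by auto
      then have "I \<in> G" using mu(3) unfolding Gn_def by auto
      then have "l < avg M h 1 I" unfolding G_def by auto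
      then have "l * emeasure M (box I) \<le> (\<integral>\<^sup>+x\<in>box I. h x \<partial>M)"
        unfolding avg_def epowr1 by (rule lt_div)
      also have "\<dots> = emeasure (density M h) (box I)"
        by (rule emeasure_density[symmetric, OF h boxM])
      finally show "l * emeasure M S \<le> emeasure (density M h) S" unfolding I(2) .
    qed
    also have "\<dots> = emeasure (density M h) (\<Union>(id ` B))"
    proof -
      have "emeasure (density M h) (\<Union>(id ` B)) = (\<integral>\<^sup>+S. emeasure (density M h) (id S) \<partial>count_space B)"
        by (rule emeasure_UN_countable[OF _ cB dB]) (simp add: BM)
      then show ?thesis by simp
    qed
    also have "\<dots> = (\<integral>\<^sup>+x. h x * indicator (\<Union>(id ` B)) x \<partial>M)"
      by (rule emeasure_density[OF h]) (metis UB UM)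
    also have "\<dots> \<le> (\<integral>\<^sup>+x. h x \<partial>M)"
      by (intro nn_integral_mono) (simp add: indicator_def)
    finally show ?thesis .
  qed
  have "emeasure M (\<Union>n. U n) = (SUP n. emeasure M (U n))"
    by (rule SUP_emeasure_incseq[symmetric]) (use UM inc in auto)
  then have "l * emeasure M {z. l < MF D M 1 h z} = l * (SUP n. emeasure M (U n))"
    by (simp only: eq UG)
  also have "\<dots> = (SUP n. l * emeasure M (U n))" by (rule SUP_mult_left_ennreal)
  also have "\<dots> \<le> (\<integral>\<^sup>+x. h x \<partial>M)" using bound by (rule SUP_least)
  finally show ?thesis .
qed

lemma single_le:
  fixes f :: "'a \<Rightarrow> ennreal"
  shows "f j0 \<le> (\<integral>\<^sup>+j. f j \<partial>count_space UNIV)"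
proof -
  have "(\<integral>\<^sup>+j. f j0 * indicator {j0} j \<partial>count_space UNIV) = f j0 * emeasure (count_space UNIV) {j0}"
    by (rule nn_integral_cmult_indicator) simp
  also have "emeasure (count_space UNIV) {j0} = 1" by simp
  finally have e: "(\<integral>\<^sup>+j. f j0 * indicator {j0} j \<partial>count_space UNIV) = f j0" by simp
  have "(\<integral>\<^sup>+j. f j0 * indicator {j0} j \<partial>count_space UNIV) \<le> (\<integral>\<^sup>+j. f j \<partial>count_space UNIV)"
    by (intro nn_integral_mono) (simp add: indicator_def)
  then show ?thesis using e by simp
qed

lemma ennreal_unbounded_top:
  fixes S :: ennreal
  assumes "\<And>r::real. \<exists>n::nat. r < g n" "\<And>n. ennreal (g n) \<le> S"
  shows "S = top"
proof (rule ccontr)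
  assume "S \<noteq> top"
  then obtain s where s: "S = ennreal s" "0 \<le> s" by (metis ennreal_cases)
  obtain n where "s < g n" using assms(1) by blast
  then have "ennreal s < ennreal (g n)" using s(2) by (simp add: ennreal_less_iff)
  moreover have "ennreal (g n) \<le> ennreal s" using assms(2)[of n] s(1) by simp
  ultimately show False by (meson leD)
qed

lemma layer_a:
  fixes x :: ennreal assumes p: "0 < p"
  shows "epowr x p \<le> ennreal (4 powr p) * (\<integral>\<^sup>+j. ennreal (2 powr (real_of_int j * p)) *
           indicator {j. ennreal (2 * 2 powr real_of_int j) < x} j \<partial>count_space UNIV)"
  (is "_ \<le> _ * ?S")
proof (cases "x = top")
  case True
  have "?S = top"
  proof (rule ennreal_unbounded_top[where g = "\<lambda>n. 2 powr (real n * p)"])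
    fix r :: real
    have "1 < (2::real) powr p" using p by simp
    then obtain n where "r < (2 powr p) ^ n" using real_arch_pow by blast
    also have "(2 powr p) ^ n = 2 powr (real n * p)" by (simp add: powr_realpow[symmetric] powr_powr mult.commute)
    finally show "\<exists>n. r < 2 powr (real n * p)" by blast
  next
    fix n :: nat
    have "ennreal (2 powr (real n * p)) = ennreal (2 powr (real_of_int (int n) * p)) *
           indicator {j. ennreal (2 * 2 powr real_of_int j) < x} (int n)"
      using True by (simp add: indicator_def)
    also have "\<dots> \<le> ?S" by (rule single_le[where f = "\<lambda>j. ennreal (2 powr (real_of_int j * p)) *
           indicator {j. ennreal (2 * 2 powr real_of_int j) < x} j"])
    finally show "ennreal (2 powr (real n * p)) \<le> ?S" .
  qed
  then show ?thesis using True p by (simp add: epowr_def ennreal_mult_top)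
next
  case False
  show ?thesis
  proof (cases "x = 0")
    case True
    then show ?thesis using p by (simp add: epowr_def)
  next
    case x0: False
    define xr where "xr = enn2real x"
    have xr: "x = ennreal xr" "0 < xr" using False x0 unfolding xr_def
      by (auto simp: ennreal_enn2real_if enn2real_positive_iff less_top[symmetric] zero_less_iff_neq_zero)
    define j where "j = \<lceil>log 2 xr\<rceil> - 2"
    have u: "xr \<le> 2 powr (real_of_int j + 2)"
    proof -
      have "log 2 xr \<le> real_of_int j + 2" unfolding j_def by linarith
      then have "2 powr (log 2 xr) \<le> 2 powr (real_of_int j + 2)" by simp
      then show ?thesis using xr by simp
    qed
    have l: "2 * 2 powr real_of_int j < xr"
    proof -
      have "real_of_int j + 1 < log 2 xr" unfolding j_def by linarith
      then have "2 powr (real_of_int j + 1) < 2 powr (log 2 xr)" by simp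
      then show ?thesis using xr by (simp add: powr_add)
    qed
    have "xr powr p \<le> (2 powr (real_of_int j + 2)) powr p" using u xr p by (simp add: powr_mono2)
    also have "\<dots> = 4 powr p * 2 powr (real_of_int j * p)"
    proof -
      have "(2::real) powr (real_of_int j + 2) = 4 * 2 powr real_of_int j" by (simp add: powr_add)
      then have "(2 powr (real_of_int j + 2)) powr p = 4 powr p * (2 powr real_of_int j) powr p"
        by (simp add: powr_mult)
      then show ?thesis by (simp add: powr_powr)
    qed
    finally have "ennreal (xr powr p) \<le> ennreal (4 powr p) * ennreal (2 powr (real_of_int j * p))"
      by (simp add: ennreal_mult[symmetric])
    also have "ennreal (2 powr (real_of_int j * p)) = ennreal (2 powr (real_of_int j * p)) *
           indicator {j. ennreal (2 * 2 powr real_of_int j) < x} j"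
      using l xr by (simp add: indicator_def ennreal_less_iff)
    also have "\<dots> \<le> ?S" by (rule single_le[where f = "\<lambda>j. ennreal (2 powr (real_of_int j * p)) *
           indicator {j. ennreal (2 * 2 powr real_of_int j) < x} j"])
    finally show ?thesis using False xr by (simp add: epowr_def mult_left_mono)
  qed
qed

lemma p2neg: "0 < s \<Longrightarrow> (2::real) powr (-s) < 1"
  using powr_less_mono[of "-s" 0 "2::real"] by simp

lemma geo_int_sum:
  fixes s :: real and J :: int assumes s: "0 < s"
  shows "(\<integral>\<^sup>+j. ennreal (2 powr (real_of_int j * s)) * indicator {..J} j \<partial>count_space UNIV)
     = ennreal (2 powr (real_of_int J * s) * (1 / (1 - 2 powr (-s))))"
proof -
  have "(\<integral>\<^sup>+j. ennreal (2 powr (real_of_int j * s)) * indicator {..J} j \<partial>count_space UNIV)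
      = (\<integral>\<^sup>+j. ennreal (2 powr (real_of_int j * s)) \<partial>count_space {..J})"
    by (rule nn_integral_count_space_indicator[symmetric]) simp
  also have "\<dots> = (\<integral>\<^sup>+n. ennreal (2 powr (real_of_int (J - int n) * s)) \<partial>count_space UNIV)"
  proof (rule nn_integral_bij_count_space[symmetric, where g = "\<lambda>n. J - int n"])
    show "bij_betw (\<lambda>n. J - int n) UNIV {..J}"
      unfolding bij_betw_def
    proof
      show "inj (\<lambda>n. J - int n)" by (auto simp: inj_def)
      show "range (\<lambda>n. J - int n) = {..J}"
      proof
        show "range (\<lambda>n. J - int n) \<subseteq> {..J}" by auto
        show "{..J} \<subseteq> range (\<lambda>n. J - int n)"
        proof
          fix j assume "j \<in> {..J}"
          then have "j = J - int (nat (J - j))" by simp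
          then show "j \<in> range (\<lambda>n. J - int n)" by blast
        qed
      qed
    qed
  qed
  also have "\<dots> = (\<Sum>n. ennreal (2 powr (real_of_int J * s) * (2 powr (-s)) ^ n))"
  proof -
    have "2 powr (real_of_int (J - int n) * s) = 2 powr (real_of_int J * s) * (2 powr (-s)) ^ n" for n
    proof -
      have "(2 powr (-s)) ^ n = 2 powr (- s * real n)"
        by (simp add: powr_realpow[symmetric] powr_powr)
      then show ?thesis by (simp add: powr_add[symmetric] algebra_simps)
    qed
    then show ?thesis by (simp add: nn_integral_count_space_nat)
  qed
  also have "\<dots> = ennreal (2 powr (real_of_int J * s) * (1 / (1 - 2 powr (-s))))"
  proof (rule suminf_ennreal_eq)
    show "\<And>i. 0 \<le> 2 powr (real_of_int J * s) * (2 powr - s) ^ i" by simp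
    have "norm ((2::real) powr (-s)) < 1" using s p2neg by simp
    then show "(\<lambda>i. 2 powr (real_of_int J * s) * (2 powr - s) ^ i) sums (2 powr (real_of_int J * s) * (1 / (1 - 2 powr - s)))"
      by (intro sums_mult geometric_sums)
  qed
  finally show ?thesis .
qed

lemma layer_c:
  fixes y :: ennreal assumes s: "0 < s"
  shows "y * (\<integral>\<^sup>+j. ennreal (2 powr (real_of_int j * s)) * indicator {j. ennreal (2 powr real_of_int j) < y} j \<partial>count_space UNIV)
     \<le> ennreal (1 / (1 - 2 powr (-s))) * epowr y (s + 1)"
  (is "y * ?T \<le> ennreal ?K * _")
proof -
  have K: "0 < ?K" using s p2neg by simp
  show ?thesis
  proof (cases "y = top")
    case True
    then show ?thesis using K s by (simp add: epowr_def ennreal_mult_top)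
  next
    case False
    show ?thesis
    proof (cases "y = 0")
      case True
      then show ?thesis by simp
    next
      case y0: False
      define yr where "yr = enn2real y"
      have yr: "y = ennreal yr" "0 < yr" using False y0 unfolding yr_def
        by (auto simp: ennreal_enn2real_if enn2real_positive_iff less_top[symmetric] zero_less_iff_neq_zero)
      define J where "J = \<lceil>log 2 yr\<rceil> - 1"
      have Jl: "2 powr real_of_int J < yr"
      proof -
        have "real_of_int J < log 2 yr" unfolding J_def by linarith
        then have "2 powr real_of_int J < 2 powr (log 2 yr)" by simp
        then show ?thesis using yr by simp
      qed
      have sub: "j \<le> J" if "ennreal (2 powr real_of_int j) < y" for j
      proof -
        have "2 powr real_of_int j < yr" using that yr by (simp add: ennreal_less_iff)
        then have "2 powr real_of_int j < 2 powr (log 2 yr)" using yr by simp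
        then have "real_of_int j < log 2 yr" by simp
        then have "real_of_int j < \<lceil>log 2 yr\<rceil>" by linarith
        then show ?thesis unfolding J_def by simp
      qed
      have "?T \<le> (\<integral>\<^sup>+j. ennreal (2 powr (real_of_int j * s)) * indicator {..J} j \<partial>count_space UNIV)"
        by (intro nn_integral_mono) (auto simp: indicator_def dest: sub)
      also have "\<dots> = ennreal (2 powr (real_of_int J * s) * ?K)" by (rule geo_int_sum[OF s])
      also have "\<dots> \<le> ennreal (yr powr s * ?K)"
      proof -
        have "2 powr (real_of_int J * s) = (2 powr real_of_int J) powr s" by (simp add: powr_powr)
        also have "\<dots> \<le> yr powr s" using Jl s by (intro powr_mono2) auto
        finally show ?thesis using K by (intro ennreal_leI mult_right_mono) auto
      qed
      finally have "y * ?T \<le> ennreal yr * ennreal (yr powr s * ?K)" using yr by (simp add: mult_left_mono)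
      also have "\<dots> = ennreal (yr * (yr powr s * ?K))"
        by (rule ennreal_mult[symmetric]) (use yr K in auto)
      also have "yr * (yr powr s * ?K) = ?K * yr powr (s + 1)" using yr by (simp add: powr_add)
      also have "ennreal (?K * yr powr (s + 1)) = ennreal ?K * ennreal (yr powr (s + 1))"
        by (rule ennreal_mult) (use K in auto)
      finally show ?thesis using yr False by (simp add: epowr_def)
    qed
  qed
qed

lemma tm_div: "(t * (m::ennreal)) / m \<le> t"
  by (metis divide_le_posI_ennreal ennreal_zero_less_mult_iff mult.commute ennreal_times_divide order_refl not_gr_zero order_less_imp_le)

lemma MF_alt: "MF D M e h z = (SUP I\<in>D. avg M h e I * indicator (box I) z)"
proof (rule antisym)
  show "MF D M e h z \<le> (SUP I\<in>D. avg M h e I * indicator (box I) z)"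
    unfolding MF_def
  proof (rule SUP_least)
    fix I assume "I \<in> {I \<in> D. z \<in> box I}"
    then show "avg M h e I \<le> (SUP I\<in>D. avg M h e I * indicator (box I) z)"
      by (intro SUP_upper2[of I]) auto
  qed
  show "(SUP I\<in>D. avg M h e I * indicator (box I) z) \<le> MF D M e h z"
  proof (rule SUP_least)
    fix I assume I: "I \<in> D"
    show "avg M h e I * indicator (box I) z \<le> MF D M e h z"
    proof (cases "z \<in> box I")
      case True
      then show ?thesis unfolding MF_def using I by (intro SUP_upper2[of I]) auto
    qed simp
  qed
qed

lemma MF_meas:
  assumes g: "good D" and sN: "sets N = sets borel"
  shows "MF D M e h \<in> borel_measurable N"
proof -
  have cD: "countable D" using g unfolding good_def by auto
  have bN: "box I \<in> sets N" for I unfolding sN by (rule box_sets)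
  have "(\<lambda>z. SUP I\<in>D. avg M h e I * indicator (box I) z) \<in> borel_measurable N"
  proof (rule borel_measurable_SUP[OF cD])
    fix I
    show "(\<lambda>z. avg M h e I * indicator (box I) z) \<in> borel_measurable N"
      using bN by (intro borel_measurable_times_ennreal borel_measurable_const borel_measurable_indicator)
  qed
  then show ?thesis unfolding MF_alt[abs_def] .
qed

lemma sublin:
  assumes sM: "sets M = sets borel" and h: "h \<in> borel_measurable M"
  shows "MF D M 1 h z \<le> MF D M 1 (\<lambda>x. if t < h x then h x else 0) z + t"
  (is "_ \<le> MF D M 1 ?h1 z + t")
  unfolding MF_def[of D M 1 h]
proof (rule SUP_least)
  fix I assume I: "I \<in> {I \<in> D. z \<in> box I}"
  define h2 where "h2 x = (if t < h x then 0 else h x)" for x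
  have bM: "box I \<in> sets M" unfolding sM by (rule box_sets)
  have h1m: "(\<lambda>x. ?h1 x * indicator (box I) x) \<in> borel_measurable M"
    using h bM by measurable
  have h2m: "(\<lambda>x. h2 x * indicator (box I) x) \<in> borel_measurable M"
    unfolding h2_def using h bM by measurable
  have "(\<integral>\<^sup>+x\<in>box I. h x \<partial>M) = (\<integral>\<^sup>+x. ?h1 x * indicator (box I) x + h2 x * indicator (box I) x \<partial>M)"
    by (intro nn_integral_cong) (simp add: h2_def)
  also have "\<dots> = (\<integral>\<^sup>+x\<in>box I. ?h1 x \<partial>M) + (\<integral>\<^sup>+x\<in>box I. h2 x \<partial>M)"
    by (rule nn_integral_add[OF h1m h2m])
  finally have sp: "(\<integral>\<^sup>+x\<in>box I. h x \<partial>M) = (\<integral>\<^sup>+x\<in>box I. ?h1 x \<partial>M) + (\<integral>\<^sup>+x\<in>box I. h2 x \<partial>M)" .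
  have "(\<integral>\<^sup>+x\<in>box I. h2 x \<partial>M) \<le> (\<integral>\<^sup>+x. t * indicator (box I) x \<partial>M)"
    by (intro nn_integral_mono) (auto simp: h2_def indicator_def not_less)
  also have "\<dots> = t * emeasure M (box I)" by (rule nn_integral_cmult_indicator[OF bM])
  finally have b2: "(\<integral>\<^sup>+x\<in>box I. h2 x \<partial>M) \<le> t * emeasure M (box I)" .
  have "avg M h 1 I = (\<integral>\<^sup>+x\<in>box I. ?h1 x \<partial>M) / emeasure M (box I) + (\<integral>\<^sup>+x\<in>box I. h2 x \<partial>M) / emeasure M (box I)"
    unfolding avg_def epowr1 sp by (simp add: add_divide_distrib_ennreal)
  also have "\<dots> \<le> avg M ?h1 1 I + t"
  proof (rule add_mono)
    show "(\<integral>\<^sup>+x\<in>box I. ?h1 x \<partial>M) / emeasure M (box I) \<le> avg M ?h1 1 I" by (simp add: avg_def)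
    have "(\<integral>\<^sup>+x\<in>box I. h2 x \<partial>M) / emeasure M (box I) \<le> (t * emeasure M (box I)) / emeasure M (box I)"
      using b2 by (simp add: divide_right_mono_ennreal)
    also have "\<dots> \<le> t" by (rule tm_div)
    finally show "(\<integral>\<^sup>+x\<in>box I. h2 x \<partial>M) / emeasure M (box I) \<le> t" .
  qed
  also have "\<dots> \<le> MF D M 1 ?h1 z + t"
    unfolding MF_def using I by (intro add_mono SUP_upper) auto
  finally show "avg M h 1 I \<le> MF D M 1 ?h1 z + t" .
qed

lemma epowr_meas[measurable]:
  "f \<in> borel_measurable M \<Longrightarrow> (\<lambda>x. epowr (f x) p) \<in> borel_measurable M"
proof -
  assume f[measurable]: "f \<in> borel_measurable M"
  have "(\<lambda>x. ennreal (enn2real (f x) powr p)) \<in> borel_measurable M"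
    by (intro measurable_compose[OF _ measurable_ennreal] powr_real_measurable measurable_compose[OF f] borel_measurable_enn2real measurable_const) (simp_all add: measurable_ident[unfolded id_def])
  moreover have "{x \<in> space M. f x = top} \<in> sets M" by measurable
  ultimately show ?thesis unfolding epowr_def infinity_ennreal_def
    by (intro measurable_If measurable_const) auto
qed

lemma strong_type:
  assumes g: "good D" and sM: "sets M = sets borel" and gm: "g \<in> borel_measurable M" and p: "1 < p"
  shows "(\<integral>\<^sup>+z. epowr (MF D M 1 g z) p \<partial>M)
     \<le> ennreal (4 powr p) * ennreal (1 / (1 - 2 powr (-(p-1)))) * (\<integral>\<^sup>+z. epowr (g z) p \<partial>M)"
proof -
  define G where "G = MF D M 1 g"
  have Gm: "G \<in> borel_measurable M" unfolding G_def by (rule MF_meas[OF g sM])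
  define A where "A = ennreal (4 powr p)"
  define K where "K = ennreal (1 / (1 - 2 powr (-(p-1))))"
  define c where "c j = ennreal (2 powr (real_of_int j * p))" for j :: int
  define d where "d j = ennreal (2 powr (real_of_int j * (p - 1)))" for j :: int
  define t where "t j = (2::real) powr real_of_int j" for j :: int
  define gj where "gj j x = (if ennreal (t j) < g x then g x else 0)" for j x
  have gjm: "gj j \<in> borel_measurable M" for j unfolding gj_def using gm by measurable
  have setm: "{z \<in> space M. a < f z} \<in> sets M" if "f \<in> borel_measurable M" for a :: ennreal and f
    using that by measurable
  have sp: "space M = UNIV" using sM sets_eq_imp_space_eq by fastforce
  have setm': "{z. a < f z} \<in> sets M" if "f \<in> borel_measurable M" for a :: ennreal and f
    using setm[OF that, of a] sp by simp
  have cdt: "c j = d j * ennreal (t j)" for j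
  proof -
    have "2 powr (real_of_int j * p) = 2 powr (real_of_int j * (p - 1)) * 2 powr real_of_int j"
      by (simp add: powr_add[symmetric] algebra_simps)
    then show ?thesis unfolding c_def d_def t_def by (simp add: ennreal_mult)
  qed
  have step1: "(\<integral>\<^sup>+z. epowr (G z) p \<partial>M) \<le>
      (\<integral>\<^sup>+z. (\<integral>\<^sup>+j. A * c j * indicator {z. ennreal (2 * t j) < G z} z \<partial>count_space UNIV) \<partial>M)"
  proof (rule nn_integral_mono)
    fix z
    have "epowr (G z) p \<le> A * (\<integral>\<^sup>+j. c j * indicator {j. ennreal (2 * t j) < G z} j \<partial>count_space UNIV)"
      unfolding A_def c_def t_def using p by (intro layer_a) simp
    also have "\<dots> = (\<integral>\<^sup>+j. A * (c j * indicator {j. ennreal (2 * t j) < G z} j) \<partial>count_space UNIV)"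
      by (rule nn_integral_cmult[symmetric]) simp
    also have "\<dots> = (\<integral>\<^sup>+j. A * c j * indicator {z. ennreal (2 * t j) < G z} z \<partial>count_space UNIV)"
      by (intro nn_integral_cong) (simp add: indicator_def mult.assoc)
    finally show "epowr (G z) p \<le> (\<integral>\<^sup>+j. A * c j * indicator {z. ennreal (2 * t j) < G z} z \<partial>count_space UNIV)" .
  qed
  also have "\<dots> = (\<integral>\<^sup>+j. (\<integral>\<^sup>+z. A * c j * indicator {z. ennreal (2 * t j) < G z} z \<partial>M) \<partial>count_space UNIV)"
  proof (rule nn_integral_count_space_nn_integral)
    fix j :: int
    show "(\<lambda>z. A * c j * indicator {z. ennreal (2 * t j) < G z} z) \<in> borel_measurable M"
      using setm'[OF Gm] by (intro borel_measurable_times_ennreal borel_measurable_const borel_measurable_indicator) auto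
  qed simp
  also have "\<dots> \<le> (\<integral>\<^sup>+j. (\<integral>\<^sup>+z. A * d j * gj j z \<partial>M) \<partial>count_space UNIV)"
  proof (rule nn_integral_mono)
    fix j :: int
    have "(\<integral>\<^sup>+z. A * c j * indicator {z. ennreal (2 * t j) < G z} z \<partial>M) = A * c j * emeasure M {z. ennreal (2 * t j) < G z}"
      by (rule nn_integral_cmult_indicator[OF setm'[OF Gm]])
    also have "\<dots> \<le> A * c j * emeasure M {z. ennreal (t j) < MF D M 1 (gj j) z}"
    proof (intro mult_left_mono emeasure_mono)
      show "{z. ennreal (t j) < MF D M 1 (gj j) z} \<in> sets M" by (rule setm'[OF MF_meas[OF g sM]])
      show "{z. ennreal (2 * t j) < G z} \<subseteq> {z. ennreal (t j) < MF D M 1 (gj j) z}"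
      proof safe
        fix z assume z: "ennreal (2 * t j) < G z"
        have "G z \<le> MF D M 1 (gj j) z + ennreal (t j)" unfolding G_def gj_def by (rule sublin[OF sM gm])
        moreover have "ennreal (2 * t j) = ennreal (t j) + ennreal (t j)"
          by (simp add: t_def ennreal_plus[symmetric])
        ultimately show "ennreal (t j) < MF D M 1 (gj j) z" using z
          by (metis add_right_mono leD leI order.strict_trans2)
      qed
    qed auto
    also have "\<dots> = A * d j * (ennreal (t j) * emeasure M {z. ennreal (t j) < MF D M 1 (gj j) z})"
      by (simp add: cdt mult.assoc)
    also have "\<dots> \<le> A * d j * (\<integral>\<^sup>+z. gj j z \<partial>M)"
      by (intro mult_left_mono weak_type[OF g sM gjm]) auto
    also have "\<dots> = (\<integral>\<^sup>+z. A * d j * gj j z \<partial>M)"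
      by (rule nn_integral_cmult[symmetric, OF gjm])
    finally show "(\<integral>\<^sup>+z. A * c j * indicator {z. ennreal (2 * t j) < G z} z \<partial>M) \<le> (\<integral>\<^sup>+z. A * d j * gj j z \<partial>M)" .
  qed
  also have "\<dots> = (\<integral>\<^sup>+z. (\<integral>\<^sup>+j. A * d j * gj j z \<partial>count_space UNIV) \<partial>M)"
    by (rule nn_integral_count_space_nn_integral[symmetric]) (use gjm in simp_all)
  also have "\<dots> \<le> (\<integral>\<^sup>+z. A * (K * epowr (g z) p) \<partial>M)"
  proof (rule nn_integral_mono)
    fix z
    have "(\<integral>\<^sup>+j. A * d j * gj j z \<partial>count_space UNIV) =
        (\<integral>\<^sup>+j. (A * g z) * (d j * indicator {j. ennreal (2 powr real_of_int j) < g z} j) \<partial>count_space UNIV)"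
      by (intro nn_integral_cong) (simp add: gj_def t_def indicator_def mult_ac)
    also have "\<dots> = (A * g z) * (\<integral>\<^sup>+j. d j * indicator {j. ennreal (2 powr real_of_int j) < g z} j \<partial>count_space UNIV)"
      by (rule nn_integral_cmult) simp
    also have "\<dots> = A * (g z * (\<integral>\<^sup>+j. d j * indicator {j. ennreal (2 powr real_of_int j) < g z} j \<partial>count_space UNIV))"
      by (simp add: mult.assoc)
    also have "\<dots> \<le> A * (K * epowr (g z) (p - 1 + 1))"
      unfolding d_def K_def using p by (intro mult_left_mono layer_c) auto
    finally show "(\<integral>\<^sup>+j. A * d j * gj j z \<partial>count_space UNIV) \<le> A * (K * epowr (g z) p)" by simp
  qed
  also have "\<dots> = A * K * (\<integral>\<^sup>+z. epowr (g z) p \<partial>M)"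
    using gm by (simp add: nn_integral_cmult mult.assoc)
  finally show ?thesis unfolding G_def A_def K_def .
qed

lemma holder:
  fixes gr :: "complex \<Rightarrow> real"
  assumes gm: "gr \<in> borel_measurable M" and g0: "\<And>x. 0 \<le> gr x" and Q: "Q \<in> sets M"
    and mQ: "emeasure M Q = ennreal mr" and mr: "0 < mr"
    and NN: "(\<integral>\<^sup>+x. ennreal (gr x powr p) \<partial>M) = ennreal Nr" and Nr: "0 < Nr" and p: "1 < p"
  shows "(\<integral>\<^sup>+x\<in>Q. ennreal (gr x) \<partial>M) \<le> ennreal (mr powr (1 - 1/p) * Nr powr (1/p))"
proof -
  define p' where "p' = p / (p - 1)"
  have p'1: "1 < p'" using p unfolding p'_def by (simp add: field_simps)
  have pp': "1/p + 1/p' = 1" using p unfolding p'_def by (simp add: field_simps)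
  define A where "A = Nr powr (1/p)"
  define B where "B = mr powr (1/p')"
  have A: "0 < A" "A powr p = Nr" unfolding A_def using Nr p by (auto simp: powr_powr)
  have B: "0 < B" "B powr p' = mr" unfolding B_def using mr p'1 by (auto simp: powr_powr)
  have "1/p' = 1 - 1/p" using pp' by linarith
  then have B': "B = mr powr (1 - 1/p)" unfolding B_def by simp
  define c1 where "c1 = A * B / (p * Nr)"
  define c2 where "c2 = A * B / (p' * mr)"
  have c: "0 \<le> c1" "0 \<le> c2" unfolding c1_def c2_def using A B p p'1 Nr mr by auto
  have pw: "gr x \<le> c1 * gr x powr p + c2" for x
  proof -
    have "(gr x / A) * (1 / B) \<le> (gr x / A) powr p / p + (1 / B) powr p' / p'"
      by (rule Youngs_inequality[OF p p'1 pp']) (use g0[of x] A(1) B(1) in auto)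
    also have "(gr x / A) powr p = gr x powr p / Nr" using A g0[of x] by (simp add: powr_divide)
    also have "(1 / B) powr p' = 1 / mr" using B by (simp add: powr_divide)
    finally have "(gr x / A) * (1 / B) \<le> gr x powr p / Nr / p + 1 / mr / p'" .
    then have "A * B * ((gr x / A) * (1 / B)) \<le> A * B * (gr x powr p / Nr / p + 1 / mr / p')"
      using A B by (intro mult_left_mono) auto
    then show ?thesis using A B unfolding c1_def c2_def by (simp add: field_simps)
  qed
  have "(\<integral>\<^sup>+x\<in>Q. ennreal (gr x) \<partial>M) \<le> (\<integral>\<^sup>+x. ennreal c1 * (ennreal (gr x powr p) * indicator Q x) + ennreal c2 * indicator Q x \<partial>M)"
  proof (rule nn_integral_mono)
    fix x
    have "ennreal (gr x) \<le> ennreal (c1 * gr x powr p + c2)" using pw by (rule ennreal_leI)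
    also have "\<dots> = ennreal c1 * ennreal (gr x powr p) + ennreal c2"
      using c g0[of x] by (simp add: ennreal_mult)
    finally show "ennreal (gr x) * indicator Q x \<le> ennreal c1 * (ennreal (gr x powr p) * indicator Q x) + ennreal c2 * indicator Q x"
      by (auto simp: indicator_def)
  qed
  also have "\<dots> = ennreal c1 * (\<integral>\<^sup>+x\<in>Q. ennreal (gr x powr p) \<partial>M) + ennreal c2 * emeasure M Q"
    using gm Q by (simp add: nn_integral_add nn_integral_cmult nn_integral_cmult_indicator)
  also have "\<dots> \<le> ennreal c1 * ennreal Nr + ennreal c2 * ennreal mr"
  proof (intro add_mono mult_left_mono)
    have "(\<integral>\<^sup>+x\<in>Q. ennreal (gr x powr p) \<partial>M) \<le> (\<integral>\<^sup>+x. ennreal (gr x powr p) \<partial>M)"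
      by (intro nn_integral_mono) (simp add: indicator_def)
    then show "(\<integral>\<^sup>+x\<in>Q. ennreal (gr x powr p) \<partial>M) \<le> ennreal Nr" using NN by simp
  qed (use mQ in auto)
  also have "\<dots> = ennreal (c1 * Nr + c2 * mr)"
    using c Nr mr by (simp add: ennreal_mult)
  also have "c1 * Nr + c2 * mr = A * B" unfolding c1_def c2_def using Nr mr p p'1 pp'
    by (simp add: field_simps)
  finally show ?thesis unfolding A_def B' by (simp add: mult.commute)
qed

lemma epowr_top[simp]: "epowr top a = top"
  unfolding epowr_def by simp

lemma epowr_ennreal: "0 \<le> r \<Longrightarrow> epowr (ennreal r) a = ennreal (r powr a)"
  unfolding epowr_def by simp

lemma epowr_0: "epowr 0 a = 0"
  unfolding epowr_def by simp

lemma epowr_mono: assumes "x \<le> y" "0 \<le> a" shows "epowr x a \<le> epowr y a"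
proof (cases "y = top")
  case True then show ?thesis by simp
next
  case False
  then have xf: "x \<noteq> top" using assms(1) by (metis top.extremum_uniqueI)
  have "enn2real x \<le> enn2real y" by (rule enn2real_mono[OF assms(1)]) (simp add: False less_top[symmetric])
  then have "enn2real x powr a \<le> enn2real y powr a" using assms(2) by (intro powr_mono2) auto
  then show ?thesis using False xf unfolding epowr_def by (simp add: ennreal_leI)
qed

lemma epowr_mult:
  assumes c: "0 < c" and a: "0 < a"
  shows "epowr (x * ennreal c) a = epowr x a * ennreal (c powr a)"
proof (cases "x = top")
  case True
  then show ?thesis using c a by (simp add: ennreal_mult_top ennreal_top_mult)
next
  case False
  then obtain r where r: "x = ennreal r" "0 \<le> r" by (metis ennreal_cases)
  have "epowr (x * ennreal c) a = ennreal ((r * c) powr a)" using r c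
    by (simp add: ennreal_mult[symmetric] epowr_ennreal)
  also have "\<dots> = ennreal (r powr a) * ennreal (c powr a)" using r c
    by (simp add: powr_mult ennreal_mult)
  finally show ?thesis using r by (simp add: epowr_ennreal)
qed

lemma epowr_epowr:
  shows "epowr (epowr x a) b = epowr x (a * b)"
proof (cases "x = top")
  case True then show ?thesis by simp
next
  case False
  then obtain r where r: "x = ennreal r" "0 \<le> r" by (metis ennreal_cases)
  then show ?thesis by (simp add: epowr_ennreal powr_powr)
qed

lemma frac_real:
  fixes ar mr Nn s e p :: real
  assumes ar: "0 < ar" and mr: "0 < mr" and Nn: "0 < Nn" and h: "ar \<le> mr powr (1 - 1/p) * Nn"
    and s: "0 < s" "s \<le> 1" and ex: "(1 - 1/p) * (1 - s) + s - e = 0"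
  shows "ar / mr powr e \<le> (ar / mr) powr s * Nn powr (1 - s)"
proof -
  have "ar powr (1 - s) \<le> (mr powr (1 - 1/p) * Nn) powr (1 - s)"
    using h ar s by (intro powr_mono2) auto
  also have "\<dots> = mr powr ((1 - 1/p) * (1 - s)) * Nn powr (1 - s)"
    using mr Nn by (simp add: powr_mult powr_powr)
  finally have h2: "ar powr (1 - s) \<le> mr powr ((1 - 1/p) * (1 - s)) * Nn powr (1 - s)" .
  have "ar / mr powr e = ar powr s * ar powr (1 - s) * mr powr (- e)"
    using ar mr by (simp add: powr_add[symmetric] powr_minus divide_inverse)
  also have "\<dots> \<le> ar powr s * (mr powr ((1 - 1/p) * (1 - s)) * Nn powr (1 - s)) * mr powr (- e)"
    using h2 ar mr by (intro mult_right_mono mult_left_mono) auto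
  also have "\<dots> = ar powr s * Nn powr (1 - s) * (mr powr ((1 - 1/p) * (1 - s)) * mr powr (- e))"
    by (simp add: mult_ac)
  also have "mr powr ((1 - 1/p) * (1 - s)) * mr powr (- e) = mr powr ((1 - 1/p) * (1 - s) + (- e))"
    by (rule powr_add[symmetric])
  also have "(1 - 1/p) * (1 - s) + (- e) = - s" using ex by linarith
  also have "ar powr s * Nn powr (1 - s) * mr powr (- s) = (ar / mr) powr s * Nn powr (1 - s)"
  proof -
    have "(ar / mr) powr s = ar powr s / mr powr s" using ar mr by (simp add: powr_divide)
    then show ?thesis using mr by (simp add: powr_minus field_simps)
  qed
  finally show ?thesis .
qed

lemma avg_frac:
  assumes sM: "sets M = sets borel" and gm: "gr \<in> borel_measurable M" and g0: "\<And>x. 0 \<le> gr x"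
    and NN: "(\<integral>\<^sup>+x. ennreal (gr x powr p) \<partial>M) = ennreal Nr" and Nr: "0 < Nr" and p: "1 < p"
    and s: "0 < s" "s \<le> 1" and e: "0 < e" and ex: "(1 - 1/p) * (1 - s) + s - e = 0"
  shows "avg M (\<lambda>x. ennreal (gr x)) e I \<le> epowr (avg M (\<lambda>x. ennreal (gr x)) 1 I) s * ennreal ((Nr powr (1/p)) powr (1 - s))"
proof -
  define Q where "Q = box I"
  have bQ: "Q \<in> sets M" unfolding Q_def sM by (rule box_sets)
  define a where "a = (\<integral>\<^sup>+x\<in>Q. ennreal (gr x) \<partial>M)"
  define Nn where "Nn = Nr powr (1/p)"
  have Nn: "0 < Nn" unfolding Nn_def using Nr by simp
  have av: "avg M (\<lambda>x. ennreal (gr x)) e' I = a / epowr (emeasure M Q) e'" for e'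
    unfolding avg_def a_def Q_def ..
  show ?thesis
  proof (cases "emeasure M Q = top")
    case True
    then show ?thesis unfolding av by simp
  next
    case nt: False
    show ?thesis
    proof (cases "emeasure M Q = 0")
      case True
      then have "Q \<in> null_sets M" using bQ by (simp add: null_sets_def)
      then have "a = 0" unfolding a_def by (rule nn_integral_null_set)
      then show ?thesis unfolding av by simp
    next
      case False
      obtain mr where mr: "emeasure M Q = ennreal mr" "0 \<le> mr" using nt by (metis ennreal_cases)
      have mr0: "0 < mr" using mr False by (metis ennreal_0 order_le_less)
      have hol: "a \<le> ennreal (mr powr (1 - 1/p) * Nn)"
        unfolding a_def Nn_def by (rule holder[OF gm g0 bQ mr(1) mr0 NN Nr p])
      then have "a \<noteq> top" by (metis ennreal_neq_top neq_top_trans)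
      then obtain ar where ar: "a = ennreal ar" "0 \<le> ar" by (metis ennreal_cases)
      have arle: "ar \<le> mr powr (1 - 1/p) * Nn" using hol ar mr0 Nn by (simp add: ennreal_le_iff)
      show ?thesis
      proof (cases "ar = 0")
        case True
        then show ?thesis unfolding av ar by simp
      next
        case False
        then have ar0: "0 < ar" using ar by simp
        have "avg M (\<lambda>x. ennreal (gr x)) e I = ennreal (ar / mr powr e)"
          unfolding av ar mr using mr0 ar by (simp add: epowr_ennreal divide_ennreal)
        also have "\<dots> \<le> ennreal ((ar / mr) powr s * Nn powr (1 - s))"
          by (intro ennreal_leI frac_real[OF ar0 mr0 Nn arle s ex])
        also have "\<dots> = epowr (avg M (\<lambda>x. ennreal (gr x)) 1 I) s * ennreal (Nn powr (1 - s))"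
          unfolding av ar mr epowr1 using mr0 ar by (simp add: divide_ennreal epowr_ennreal ennreal_mult)
        finally show ?thesis unfolding Nn_def .
      qed
    qed
  qed
qed

lemma frac_bound:
  assumes sM: "sets M = sets borel" and gm: "gr \<in> borel_measurable M" and g0: "\<And>x. 0 \<le> gr x"
    and NN: "(\<integral>\<^sup>+x. ennreal (gr x powr p) \<partial>M) = ennreal Nr" and Nr: "0 < Nr" and p: "1 < p"
    and s: "0 < s" "s \<le> 1" and e: "0 < e" and ex: "(1 - 1/p) * (1 - s) + s - e = 0"
  shows "MF D M e (\<lambda>x. ennreal (gr x)) z \<le> epowr (MF D M 1 (\<lambda>x. ennreal (gr x)) z) s * ennreal ((Nr powr (1/p)) powr (1 - s))"
  unfolding MF_def[of D M e]
proof (rule SUP_least)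
  fix I assume I: "I \<in> {I \<in> D. z \<in> box I}"
  have "avg M (\<lambda>x. ennreal (gr x)) e I \<le> epowr (avg M (\<lambda>x. ennreal (gr x)) 1 I) s * ennreal ((Nr powr (1/p)) powr (1 - s))"
    by (rule avg_frac[OF sM gm g0 NN Nr p s e ex])
  also have "\<dots> \<le> epowr (MF D M 1 (\<lambda>x. ennreal (gr x)) z) s * ennreal ((Nr powr (1/p)) powr (1 - s))"
  proof (intro mult_right_mono epowr_mono)
    show "avg M (\<lambda>x. ennreal (gr x)) 1 I \<le> MF D M 1 (\<lambda>x. ennreal (gr x)) z"
      unfolding MF_def using I by (rule SUP_upper)
  qed (use s in auto)
  finally show "avg M (\<lambda>x. ennreal (gr x)) e I \<le> epowr (MF D M 1 (\<lambda>x. ennreal (gr x)) z) s * ennreal ((Nr powr (1/p)) powr (1 - s))" .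
qed

lemma UHP_sets: "UHP \<in> sets lborel"
proof -
  have "open UHP" unfolding UHP_def by (intro open_Collect_less continuous_intros)
  then show ?thesis by simp
qed

lemma wdens_meas:
  assumes "\<sigma> \<in> borel_measurable lborel"
  shows "wdens \<alpha> \<sigma> \<in> borel_measurable lborel"
proof -
  have "(\<lambda>z. Im z powr \<alpha>) \<in> borel_measurable lborel"
    by (intro powr_real_measurable measurable_const)
       (auto simp: measurable_lborel1 borel_measurable_Im[unfolded measurable_lborel1[symmetric]])
  then have "(\<lambda>z. \<sigma> z * Im z powr \<alpha>) \<in> borel_measurable lborel"
    using assms by (intro borel_measurable_times)
  then show ?thesis unfolding wdens_def[abs_def] by (rule measurable_compose[OF _ measurable_ennreal])
qed

lemma main_bound:
  fixes \<alpha> \<gamma> p q :: real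
  assumes a: "\<alpha> > -1" and "0 \<le> \<gamma>" and "\<gamma> < 2 + \<alpha>"
    and p: "1 < p" and "\<gamma> = 0 \<or> p < (2 + \<alpha>) / \<gamma>"
    and pq: "1 / p - 1 / q = \<gamma> / (2 + \<alpha>)"
    and gD: "good D" and sM: "sets M = sets borel" and gm: "gr \<in> borel_measurable M" and g0: "\<And>x. 0 \<le> gr x"
  shows "epowr (\<integral>\<^sup>+z. epowr (MF D M (1 - \<gamma> / (2 + \<alpha>)) (\<lambda>x. ennreal (gr x)) z) q \<partial>M) (1 / q)
     \<le> ennreal ((4 powr p * (1 / (1 - 2 powr (-(p-1))))) powr (1/q)) * epowr (\<integral>\<^sup>+z. ennreal (gr z powr p) \<partial>M) (1 / p)"
proof -
  define \<theta> where "\<theta> = \<gamma> / (2 + \<alpha>)"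
  have a2: "0 < 2 + \<alpha>" using a by simp
  have th0: "0 \<le> \<theta>" unfolding \<theta>_def using assms(2) a2 by simp
  have th1: "\<theta> < 1" unfolding \<theta>_def using assms(3) a2 by simp
  have thp: "\<theta> * p < 1"
  proof (cases "\<gamma> = 0")
    case True then show ?thesis unfolding \<theta>_def by simp
  next
    case False
    then have g0': "0 < \<gamma>" using assms(2) by simp
    have "p < (2 + \<alpha>) / \<gamma>" using assms(5) False by simp
    then have "p * \<gamma> < 2 + \<alpha>" using g0' by (simp add: field_simps)
    then show ?thesis unfolding \<theta>_def using a2 by (simp add: field_simps)
  qed
  have iq: "1 / q = 1 / p - \<theta>" using pq unfolding \<theta>_def by simp
  have "0 < 1 / p - \<theta>" using thp p by (simp add: field_simps)
  then have q0: "0 < q" using iq by (metis zero_less_divide_1_iff)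
  define s where "s = p / q"
  have s_eq: "s = 1 - p * \<theta>" unfolding s_def using iq p by (simp add: field_simps)
  have s0: "0 < s" using s_eq thp by (simp add: mult.commute)
  have s1: "s \<le> 1" using s_eq th0 p by simp
  have sq: "s * q = p" unfolding s_def using q0 by simp
  define e where "e = 1 - \<theta>"
  have e0: "0 < e" unfolding e_def using th1 by simp
  have ex: "(1 - 1/p) * (1 - s) + s - e = 0" unfolding e_def s_eq using p by (simp add: field_simps)
  define K where "K = 4 powr p * (1 / (1 - 2 powr (-(p-1))))"
  have K0: "0 < K" unfolding K_def using p p2neg[of "p - 1"] by simp
  define g where "g x = ennreal (gr x)" for x
  have gm': "g \<in> borel_measurable M" unfolding g_def using gm by (rule measurable_compose[OF _ measurable_ennreal])
  define N where "N = (\<integral>\<^sup>+z. ennreal (gr z powr p) \<partial>M)"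
  have Ng: "(\<integral>\<^sup>+z. epowr (g z) p \<partial>M) = N" unfolding N_def g_def using g0 by (simp add: epowr_ennreal)
  have C0: "0 < K powr (1/q)" using K0 by simp
  have main: "epowr (\<integral>\<^sup>+z. epowr (MF D M e g z) q \<partial>M) (1 / q) \<le> ennreal (K powr (1/q)) * epowr N (1 / p)"
  proof (cases "N = top")
    case True
    then show ?thesis using C0 by (simp add: ennreal_mult_top)
  next
    case Nt: False
    show ?thesis
    proof (cases "N = 0")
      case True
      have "AE x in M. ennreal (gr x powr p) = 0"
        using True unfolding N_def using gm by (subst nn_integral_0_iff_AE[symmetric]) auto
      then have ae: "AE x in M. g x = 0" unfolding g_def by eventually_elim (use g0 in simp)
      have MF0: "MF D M e g z = 0" for z
      proof -
        have "avg M g e I = 0" for I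
        proof -
          have bI: "box I \<in> sets M" unfolding sM by (rule box_sets)
          have "(\<integral>\<^sup>+x. g x * indicator (box I) x \<partial>M) = 0"
            using ae bI gm' by (subst nn_integral_0_iff_AE) (auto elim: AE_mp)
          then show ?thesis unfolding avg_def by simp
        qed
        then show ?thesis unfolding MF_def by (intro antisym SUP_least) auto
      qed
      show ?thesis by (simp add: MF0 epowr_0 epowr_def)
    next
      case N0: False
      define Nr where "Nr = enn2real N"
      have Nr: "N = ennreal Nr" "0 < Nr" using Nt N0 unfolding Nr_def
        by (auto simp: ennreal_enn2real_if enn2real_positive_iff less_top[symmetric] zero_less_iff_neq_zero)
      define Nn where "Nn = Nr powr (1/p)"
      have Nn0: "0 < Nn" unfolding Nn_def using Nr by simp
      have Nnp: "Nn powr p = Nr" unfolding Nn_def using Nr p by (simp add: powr_powr)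
      define c where "c = Nn powr (1 - s)"
      have c0: "0 < c" unfolding c_def using Nn0 by simp
      have NN: "(\<integral>\<^sup>+x. ennreal (gr x powr p) \<partial>M) = ennreal Nr" using Nr unfolding N_def by simp
      have pw: "epowr (MF D M e g z) q \<le> epowr (MF D M 1 g z) p * ennreal (c powr q)" for z
      proof -
        have "MF D M e g z \<le> epowr (MF D M 1 g z) s * ennreal c"
          unfolding g_def c_def Nn_def by (rule frac_bound[OF sM gm g0 NN Nr(2) p s0 s1 e0 ex])
        then have "epowr (MF D M e g z) q \<le> epowr (epowr (MF D M 1 g z) s * ennreal c) q"
          using q0 by (intro epowr_mono) auto
        also have "\<dots> = epowr (MF D M 1 g z) p * ennreal (c powr q)"
          using c0 q0 by (simp add: epowr_mult epowr_epowr sq)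
        finally show ?thesis .
      qed
      have "(\<integral>\<^sup>+z. epowr (MF D M e g z) q \<partial>M) \<le> (\<integral>\<^sup>+z. epowr (MF D M 1 g z) p * ennreal (c powr q) \<partial>M)"
        by (intro nn_integral_mono pw)
      also have "\<dots> = (\<integral>\<^sup>+z. epowr (MF D M 1 g z) p \<partial>M) * ennreal (c powr q)"
        by (rule nn_integral_multc) (intro epowr_meas MF_meas[OF gD sM])
      also have "\<dots> \<le> ennreal (4 powr p) * ennreal (1 / (1 - 2 powr (-(p-1)))) * N * ennreal (c powr q)"
        using strong_type[OF gD sM gm' p] Ng by (intro mult_right_mono) auto
      also have "\<dots> = ennreal (K * Nn powr q)"
      proof -
        have "ennreal (4 powr p) * ennreal (1 / (1 - 2 powr (-(p-1)))) * N * ennreal (c powr q)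
            = ennreal (K * (Nr * c powr q))"
          unfolding K_def Nr(1) using p p2neg[of "p - 1"] Nr c0
          by (simp add: ennreal_mult[symmetric] mult.assoc)
        also have "Nr * c powr q = Nn powr q"
        proof -
          have "c powr q = Nn powr ((1 - s) * q)" unfolding c_def by (simp add: powr_powr)
          also have "(1 - s) * q = q - p" using sq by (simp add: algebra_simps)
          finally have "Nr * c powr q = Nn powr p * Nn powr (q - p)" using Nnp by simp
          also have "\<dots> = Nn powr q" by (simp add: powr_add[symmetric])
          finally show ?thesis .
        qed
        finally show ?thesis .
      qed
      finally have I: "(\<integral>\<^sup>+z. epowr (MF D M e g z) q \<partial>M) \<le> ennreal (K * Nn powr q)" .
      have "epowr (\<integral>\<^sup>+z. epowr (MF D M e g z) q \<partial>M) (1/q) \<le> epowr (ennreal (K * Nn powr q)) (1/q)"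
        using I q0 by (intro epowr_mono) auto
      also have "\<dots> = ennreal (K powr (1/q) * Nn)"
        using K0 Nn0 q0 by (simp add: epowr_ennreal powr_mult powr_powr)
      also have "\<dots> = ennreal (K powr (1/q)) * epowr N (1/p)"
        using K0 Nr by (simp add: epowr_ennreal ennreal_mult Nn_def)
      finally show ?thesis .
    qed
  qed
  then show ?thesis unfolding e_def \<theta>_def K_def N_def g_def .
qed

theorem corollary4p3:
  fixes \<alpha> \<gamma> p q :: real
  assumes "\<alpha> > -1" and "0 \<le> \<gamma>" and "\<gamma> < 2 + \<alpha>"
    and "1 < p" and "\<gamma> = 0 \<or> p < (2 + \<alpha>) / \<gamma>"
    and "1 / p - 1 / q = \<gamma> / (2 + \<alpha>)"
  shows "\<exists>C::real. \<forall>\<beta> \<in> {0, 1/3}. \<forall>\<sigma>. weight \<sigma> \<longrightarrow>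
           (\<forall>f \<in> borel_measurable lborel.
              epowr (\<integral>\<^sup>+ z\<in>UHP. epowr (dmax \<beta> \<sigma> \<alpha> \<gamma> f z) q * wdens \<alpha> \<sigma> z \<partial>lborel) (1 / q)
              \<le> ennreal C * epowr (\<integral>\<^sup>+ z\<in>UHP. ennreal (norm (f z) powr p) * wdens \<alpha> \<sigma> z \<partial>lborel) (1 / p))"
proof (intro exI[of _ "(4 powr p * (1 / (1 - 2 powr (-(p-1))))) powr (1/q)"] ballI allI impI)
  fix \<beta> :: real and \<sigma> :: "complex \<Rightarrow> real" and f :: "complex \<Rightarrow> complex"
  assume \<beta>: "\<beta> \<in> {0, 1/3}" and w\<sigma>: "weight \<sigma>" and fm: "f \<in> borel_measurable lborel"
  have \<sigma>m: "\<sigma> \<in> borel_measurable lborel" using w\<sigma> unfolding weight_def by auto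
  define w where "w z = wdens \<alpha> \<sigma> z * indicator UHP z" for z
  have wm: "w \<in> borel_measurable lborel" unfolding w_def[abs_def]
    using wdens_meas[OF \<sigma>m] UHP_sets by (intro borel_measurable_times_ennreal borel_measurable_indicator)
  define M where "M = density lborel w"
  have sM': "sets M = sets lborel" unfolding M_def by simp
  have sM: "sets M = sets borel" unfolding M_def by simp
  have gD: "good (dyadic \<beta>)" using \<beta> good_dyadic by auto
  define gr where "gr z = norm (f z)" for z
  have grl: "gr \<in> borel_measurable lborel" unfolding gr_def[abs_def] using borel_measurable_norm fm by (rule measurable_compose[rotated])
  have gm: "gr \<in> borel_measurable M" by (subst measurable_cong_sets[OF sM' refl]) (rule grl)
  have T1: "(\<integral>\<^sup>+z\<in>UHP. F z * wdens \<alpha> \<sigma> z \<partial>lborel) = (\<integral>\<^sup>+z. F z \<partial>M)"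
    if Fm: "F \<in> borel_measurable lborel" for F
  proof -
    have "(\<integral>\<^sup>+z. F z \<partial>M) = (\<integral>\<^sup>+z. w z * F z \<partial>lborel)"
      unfolding M_def by (rule nn_integral_density[OF wm Fm])
    also have "\<dots> = (\<integral>\<^sup>+z\<in>UHP. F z * wdens \<alpha> \<sigma> z \<partial>lborel)"
      by (intro nn_integral_cong) (simp add: w_def mult_ac)
    finally show ?thesis by simp
  qed
  have T2: "dmax \<beta> \<sigma> \<alpha> \<gamma> f z = MF (dyadic \<beta>) M (1 - \<gamma> / (2 + \<alpha>)) (\<lambda>x. ennreal (gr x)) z" for z
    unfolding dmax_def MF_def avg_def
  proof (intro SUP_cong refl)
    fix I
    have bI: "box I \<in> sets lborel" by simp
    have num: "(\<integral>\<^sup>+x\<in>box I. ennreal (norm (f x)) * wdens \<alpha> \<sigma> x \<partial>lborel) = (\<integral>\<^sup>+x\<in>box I. ennreal (gr x) \<partial>M)"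
    proof -
      have "(\<integral>\<^sup>+x\<in>box I. ennreal (gr x) \<partial>M) = (\<integral>\<^sup>+x. w x * (ennreal (gr x) * indicator (box I) x) \<partial>lborel)"
        unfolding M_def using grl bI
        by (intro nn_integral_density[OF wm]) (intro borel_measurable_times_ennreal borel_measurable_indicator measurable_compose[OF _ measurable_ennreal])
      also have "\<dots> = (\<integral>\<^sup>+x\<in>box I. ennreal (norm (f x)) * wdens \<alpha> \<sigma> x \<partial>lborel)"
        using box_UHP[of I] by (intro nn_integral_cong) (auto simp: w_def gr_def indicator_def mult.commute)
      finally show ?thesis by simp
    qed
    have den: "wmeas \<alpha> \<sigma> (box I) = emeasure M (box I)"
    proof -
      have "emeasure M (box I) = (\<integral>\<^sup>+x. w x * indicator (box I) x \<partial>lborel)"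
        unfolding M_def by (rule emeasure_density[OF wm bI])
      also have "\<dots> = wmeas \<alpha> \<sigma> (box I)"
        unfolding wmeas_def using box_UHP[of I] by (intro nn_integral_cong) (auto simp: w_def indicator_def)
      finally show ?thesis by simp
    qed
    show "(\<integral>\<^sup>+w\<in>box I. ennreal (norm (f w)) * wdens \<alpha> \<sigma> w \<partial>lborel) / epowr (wmeas \<alpha> \<sigma> (box I)) (1 - \<gamma> / (2 + \<alpha>)) =
          (\<integral>\<^sup>+x\<in>box I. ennreal (gr x) \<partial>M) / epowr (emeasure M (box I)) (1 - \<gamma> / (2 + \<alpha>))"
      using num den by simp
  qed
  have MFm: "(\<lambda>z. epowr (MF (dyadic \<beta>) M (1 - \<gamma> / (2 + \<alpha>)) (\<lambda>x. ennreal (gr x)) z) q) \<in> borel_measurable lborel"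
    by (intro epowr_meas MF_meas[OF gD]) simp
  have L: "(\<integral>\<^sup>+ z\<in>UHP. epowr (dmax \<beta> \<sigma> \<alpha> \<gamma> f z) q * wdens \<alpha> \<sigma> z \<partial>lborel)
      = (\<integral>\<^sup>+z. epowr (MF (dyadic \<beta>) M (1 - \<gamma> / (2 + \<alpha>)) (\<lambda>x. ennreal (gr x)) z) q \<partial>M)"
    unfolding T2 by (rule T1[OF MFm])
  have pm: "(\<lambda>z. ennreal (norm (f z) powr p)) \<in> borel_measurable lborel"
    using grl unfolding gr_def[abs_def]
    by (intro measurable_compose[OF _ measurable_ennreal] powr_real_measurable measurable_const) auto
  have R: "(\<integral>\<^sup>+ z\<in>UHP. ennreal (norm (f z) powr p) * wdens \<alpha> \<sigma> z \<partial>lborel)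
      = (\<integral>\<^sup>+z. ennreal (gr z powr p) \<partial>M)"
    unfolding gr_def by (rule T1[OF pm])
  show "epowr (\<integral>\<^sup>+ z\<in>UHP. epowr (dmax \<beta> \<sigma> \<alpha> \<gamma> f z) q * wdens \<alpha> \<sigma> z \<partial>lborel) (1 / q)
         \<le> ennreal ((4 powr p * (1 / (1 - 2 powr (-(p-1))))) powr (1/q)) *
           epowr (\<integral>\<^sup>+ z\<in>UHP. ennreal (norm (f z) powr p) * wdens \<alpha> \<sigma> z \<partial>lborel) (1 / p)"
    unfolding L R by (rule main_bound[OF assms gD sM gm]) (simp add: gr_def)
qed

end
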